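(* Let $\mathcal{C}$ be a category, let $\otimes:\mathcal{C}\times\mathcal{C}\to\mathcal{C}$ be a functor, and let $\alpha$ be an associativity constraint for $\otimes$ (see context). Let $(P,\theta)$ be an idempotent in $\mathcal{C}$, i.e. $P\in\mathcal{C}$ and $\theta:P\otimes P\to P$ is an isomorphism. Let $C:P\to P$ be the unique automorphism making the diagram $$C\circ\theta\circ(\theta\otimes \mathrm{id}_P)=\theta\circ(\mathrm{id}_P\otimes\theta)\circ\alpha_{P,P,P}$$ hold as maps $(P\otimes P)\otimes P\to P$, i.e. $C=\theta\circ(\mathrm{id}_P\otimes\theta)\circ\alpha_{P,P,P}\circ(\theta\otimes\mathrm{id}_P)^{-1}\circ\theta^{-1}$. Suppose that $$\theta\circ(C\otimes\mathrm{id}_P)=C\circ\theta\quad\text{and}\quad \theta\circ(\mathrm{id}_P\otimes C)=C\circ\theta$$ as maps $P\otimes P\to P$. Then $C=\mathrm{id}_P$, i.e. $\theta$ is compatible with $\alpha$.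
   Context: An associativity constraint for a functor $\otimes:\mathcal{C}\times\mathcal{C}\to\mathcal{C}$ is a natural isomorphism $\alpha_{A,B,C}:(A\otimes B)\otimes C\to A\otimes(B\otimes C)$ (natural in $A,B,C\in\mathcal{C}$) satisfying the pentagon axiom: for all $A,B,C,D$, $(\mathrm{id}_A\otimes\alpha_{B,C,D})\circ\alpha_{A,B\otimes C,D}\circ(\alpha_{A,B,C}\otimes\mathrm{id}_D)=\alpha_{A,B,C\otimes D}\circ\alpha_{A\otimes B,C,D}$ as maps $((A\otimes B)\otimes C)\otimes D\to A\otimes(B\otimes(C\otimes D))$. No unit object or other monoidal structure is assumed. An idempotent structure $\theta$ on $P$ is called compatible with $\alpha$ if the automorphism $C$ defined in the claim is the identity. *)

theory Defs
  imports Main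
begin

text \<open>A category given by a set of objects Ob, a set of arrows Ar, domain/codomain
maps, a composition cmp g f (meaning g after f, defined when cd f = dm g) and identities.\<close>

definition category ::
  "'o set \<Rightarrow> 'm set \<Rightarrow> ('m \<Rightarrow> 'o) \<Rightarrow> ('m \<Rightarrow> 'o) \<Rightarrow> ('m \<Rightarrow> 'm \<Rightarrow> 'm) \<Rightarrow> ('o \<Rightarrow> 'm) \<Rightarrow> bool"
where
  "category Ob Ar dm cd cmp idm \<longleftrightarrow>
     (\<forall>f\<in>Ar. dm f \<in> Ob \<and> cd f \<in> Ob) \<and>
     (\<forall>A\<in>Ob. idm A \<in> Ar \<and> dm (idm A) = A \<and> cd (idm A) = A) \<and>
     (\<forall>f\<in>Ar. \<forall>g\<in>Ar. cd f = dm g \<longrightarrow>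
        cmp g f \<in> Ar \<and> dm (cmp g f) = dm f \<and> cd (cmp g f) = cd g) \<and>
     (\<forall>f\<in>Ar. cmp f (idm (dm f)) = f \<and> cmp (idm (cd f)) f = f) \<and>
     (\<forall>f\<in>Ar. \<forall>g\<in>Ar. \<forall>h\<in>Ar. cd f = dm g \<longrightarrow> cd g = dm h \<longrightarrow>
        cmp h (cmp g f) = cmp (cmp h g) f)"

definition hom :: "'m set \<Rightarrow> ('m \<Rightarrow> 'o) \<Rightarrow> ('m \<Rightarrow> 'o) \<Rightarrow> 'o \<Rightarrow> 'o \<Rightarrow> 'm set" where
  "hom Ar dm cd A B = {f \<in> Ar. dm f = A \<and> cd f = B}"

definition iso_arr ::
  "'m set \<Rightarrow> ('m \<Rightarrow> 'o) \<Rightarrow> ('m \<Rightarrow> 'o) \<Rightarrow> ('m \<Rightarrow> 'm \<Rightarrow> 'm) \<Rightarrow> ('o \<Rightarrow> 'm) \<Rightarrow> 'm \<Rightarrow> bool"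
where
  "iso_arr Ar dm cd cmp idm f \<longleftrightarrow> f \<in> Ar \<and>
     (\<exists>g\<in>Ar. dm g = cd f \<and> cd g = dm f \<and>
        cmp g f = idm (dm f) \<and> cmp f g = idm (cd f))"

definition bifunctor ::
  "'o set \<Rightarrow> 'm set \<Rightarrow> ('m \<Rightarrow> 'o) \<Rightarrow> ('m \<Rightarrow> 'o) \<Rightarrow> ('m \<Rightarrow> 'm \<Rightarrow> 'm) \<Rightarrow> ('o \<Rightarrow> 'm)
   \<Rightarrow> ('o \<Rightarrow> 'o \<Rightarrow> 'o) \<Rightarrow> ('m \<Rightarrow> 'm \<Rightarrow> 'm) \<Rightarrow> bool"
where
  "bifunctor Ob Ar dm cd cmp idm tO tA \<longleftrightarrow>
     (\<forall>A\<in>Ob. \<forall>B\<in>Ob. tO A B \<in> Ob) \<and>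
     (\<forall>f\<in>Ar. \<forall>g\<in>Ar. tA f g \<in> Ar \<and> dm (tA f g) = tO (dm f) (dm g)
        \<and> cd (tA f g) = tO (cd f) (cd g)) \<and>
     (\<forall>A\<in>Ob. \<forall>B\<in>Ob. tA (idm A) (idm B) = idm (tO A B)) \<and>
     (\<forall>f\<in>Ar. \<forall>g\<in>Ar. \<forall>f'\<in>Ar. \<forall>g'\<in>Ar. cd f = dm g \<longrightarrow> cd f' = dm g' \<longrightarrow>
        tA (cmp g f) (cmp g' f') = cmp (tA g g') (tA f f'))"

text \<open>Associativity constraint: natural isomorphism (A \<otimes> B) \<otimes> C \<rightarrow> A \<otimes> (B \<otimes> C)
satisfying the pentagon axiom (no unit assumed).\<close>

definition assoc_constraint ::
  "'o set \<Rightarrow> 'm set \<Rightarrow> ('m \<Rightarrow> 'o) \<Rightarrow> ('m \<Rightarrow> 'o) \<Rightarrow> ('m \<Rightarrow> 'm \<Rightarrow> 'm) \<Rightarrow> ('o \<Rightarrow> 'm)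
   \<Rightarrow> ('o \<Rightarrow> 'o \<Rightarrow> 'o) \<Rightarrow> ('m \<Rightarrow> 'm \<Rightarrow> 'm) \<Rightarrow> ('o \<Rightarrow> 'o \<Rightarrow> 'o \<Rightarrow> 'm) \<Rightarrow> bool"
where
  "assoc_constraint Ob Ar dm cd cmp idm tO tA \<alpha> \<longleftrightarrow>
     (\<forall>A\<in>Ob. \<forall>B\<in>Ob. \<forall>C\<in>Ob.
        \<alpha> A B C \<in> hom Ar dm cd (tO (tO A B) C) (tO A (tO B C)) \<and>
        iso_arr Ar dm cd cmp idm (\<alpha> A B C)) \<and>
     (\<forall>f\<in>Ar. \<forall>g\<in>Ar. \<forall>h\<in>Ar.
        cmp (tA f (tA g h)) (\<alpha> (dm f) (dm g) (dm h))
          = cmp (\<alpha> (cd f) (cd g) (cd h)) (tA (tA f g) h)) \<and>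
     (\<forall>A\<in>Ob. \<forall>B\<in>Ob. \<forall>C\<in>Ob. \<forall>D\<in>Ob.
        cmp (tA (idm A) (\<alpha> B C D)) (cmp (\<alpha> A (tO B C) D) (tA (\<alpha> A B C) (idm D)))
          = cmp (\<alpha> A B (tO C D)) (\<alpha> (tO A B) C D))"

end

theory Submission
  imports Defs
begin

locale cdat =
  fixes Ob :: "'o set" and Ar :: "'m set" and dm cd :: "'m \<Rightarrow> 'o"
    and cmp :: "'m \<Rightarrow> 'm \<Rightarrow> 'm" and idm :: "'o \<Rightarrow> 'm"
    and tO :: "'o \<Rightarrow> 'o \<Rightarrow> 'o" and tA :: "'m \<Rightarrow> 'm \<Rightarrow> 'm"
    and \<alpha> :: "'o \<Rightarrow> 'o \<Rightarrow> 'o \<Rightarrow> 'm"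
  assumes cat: "category Ob Ar dm cd cmp idm"
    and tens: "bifunctor Ob Ar dm cd cmp idm tO tA"
    and asc: "assoc_constraint Ob Ar dm cd cmp idm tO tA \<alpha>"
begin

lemma ar_ob[simp]: "f \<in> Ar \<Longrightarrow> dm f \<in> Ob" "f \<in> Ar \<Longrightarrow> cd f \<in> Ob"
  using cat unfolding category_def by auto

lemma id_ar[simp]: "A \<in> Ob \<Longrightarrow> idm A \<in> Ar" "A \<in> Ob \<Longrightarrow> dm (idm A) = A"
  "A \<in> Ob \<Longrightarrow> cd (idm A) = A"
  using cat unfolding category_def by auto

lemma cmp_ar[simp]: "f \<in> Ar \<Longrightarrow> g \<in> Ar \<Longrightarrow> cd f = dm g \<Longrightarrow> cmp g f \<in> Ar"
  "f \<in> Ar \<Longrightarrow> g \<in> Ar \<Longrightarrow> cd f = dm g \<Longrightarrow> dm (cmp g f) = dm f"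
  "f \<in> Ar \<Longrightarrow> g \<in> Ar \<Longrightarrow> cd f = dm g \<Longrightarrow> cd (cmp g f) = cd g"
  using cat unfolding category_def by auto

lemma id_r[simp]: "f \<in> Ar \<Longrightarrow> dm f = A \<Longrightarrow> cmp f (idm A) = f"
  and id_l[simp]: "f \<in> Ar \<Longrightarrow> cd f = A \<Longrightarrow> cmp (idm A) f = f"
  using cat unfolding category_def by auto

lemma cassoc[simp]: "f \<in> Ar \<Longrightarrow> g \<in> Ar \<Longrightarrow> h \<in> Ar \<Longrightarrow> cd f = dm g \<Longrightarrow> cd g = dm h \<Longrightarrow>
   cmp (cmp h g) f = cmp h (cmp g f)"
  using cat unfolding category_def by metis

lemma tO_ob[simp]: "A \<in> Ob \<Longrightarrow> B \<in> Ob \<Longrightarrow> tO A B \<in> Ob"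
  using tens unfolding bifunctor_def by auto

lemma tA_ar[simp]: "f \<in> Ar \<Longrightarrow> g \<in> Ar \<Longrightarrow> tA f g \<in> Ar"
  "f \<in> Ar \<Longrightarrow> g \<in> Ar \<Longrightarrow> dm (tA f g) = tO (dm f) (dm g)"
  "f \<in> Ar \<Longrightarrow> g \<in> Ar \<Longrightarrow> cd (tA f g) = tO (cd f) (cd g)"
  using tens unfolding bifunctor_def by auto

lemma tA_id[simp]: "A \<in> Ob \<Longrightarrow> B \<in> Ob \<Longrightarrow> tA (idm A) (idm B) = idm (tO A B)"
  using tens unfolding bifunctor_def by auto

lemma tA_cmp: "f \<in> Ar \<Longrightarrow> g \<in> Ar \<Longrightarrow> f' \<in> Ar \<Longrightarrow> g' \<in> Ar \<Longrightarrow> cd f = dm g \<Longrightarrow> cd f' = dm g' \<Longrightarrow>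
   tA (cmp g f) (cmp g' f') = cmp (tA g g') (tA f f')"
  using tens unfolding bifunctor_def by auto

lemma tA_Icmp: "A \<in> Ob \<Longrightarrow> f \<in> Ar \<Longrightarrow> g \<in> Ar \<Longrightarrow> cd f = dm g \<Longrightarrow>
   tA (idm A) (cmp g f) = cmp (tA (idm A) g) (tA (idm A) f)"
  using tA_cmp[of "idm A" "idm A" f g] by simp

lemma tA_cmpI: "A \<in> Ob \<Longrightarrow> f \<in> Ar \<Longrightarrow> g \<in> Ar \<Longrightarrow> cd f = dm g \<Longrightarrow>
   tA (cmp g f) (idm A) = cmp (tA g (idm A)) (tA f (idm A))"
  using tA_cmp[of f g "idm A" "idm A"] by simp

lemma al_ar[simp]: "A \<in> Ob \<Longrightarrow> B \<in> Ob \<Longrightarrow> C \<in> Ob \<Longrightarrow> \<alpha> A B C \<in> Ar"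
  "A \<in> Ob \<Longrightarrow> B \<in> Ob \<Longrightarrow> C \<in> Ob \<Longrightarrow> dm (\<alpha> A B C) = tO (tO A B) C"
  "A \<in> Ob \<Longrightarrow> B \<in> Ob \<Longrightarrow> C \<in> Ob \<Longrightarrow> cd (\<alpha> A B C) = tO A (tO B C)"
  using asc unfolding assoc_constraint_def hom_def by auto

lemma nat: "f \<in> Ar \<Longrightarrow> g \<in> Ar \<Longrightarrow> h \<in> Ar \<Longrightarrow>
   cmp (tA f (tA g h)) (\<alpha> (dm f) (dm g) (dm h)) = cmp (\<alpha> (cd f) (cd g) (cd h)) (tA (tA f g) h)"
  using asc unfolding assoc_constraint_def by auto

lemma pent: "A \<in> Ob \<Longrightarrow> B \<in> Ob \<Longrightarrow> C \<in> Ob \<Longrightarrow> D \<in> Ob \<Longrightarrow>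
   cmp (tA (idm A) (\<alpha> B C D)) (cmp (\<alpha> A (tO B C) D) (tA (\<alpha> A B C) (idm D)))
          = cmp (\<alpha> A B (tO C D)) (\<alpha> (tO A B) C D)"
  using asc unfolding assoc_constraint_def by auto

lemma xform: "cmp a b = cmp c d \<Longrightarrow> a \<in> Ar \<Longrightarrow> b \<in> Ar \<Longrightarrow> c \<in> Ar \<Longrightarrow> d \<in> Ar \<Longrightarrow> x \<in> Ar
  \<Longrightarrow> cd b = dm a \<Longrightarrow> cd d = dm c \<Longrightarrow> cd x = dm b \<Longrightarrow> cd x = dm d
  \<Longrightarrow> cmp a (cmp b x) = cmp c (cmp d x)"
  by (metis cassoc)

lemma mainlemma:
  assumes Pob: "P \<in> Ob"
    and th: "\<theta> \<in> Ar" "dm \<theta> = tO P P" "cd \<theta> = P" "iso_arr Ar dm cd cmp idm \<theta>"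
    and Ch: "C \<in> Ar" "dm C = P" "cd C = P" "iso_arr Ar dm cd cmp idm C"
    and Cdef: "cmp C (cmp \<theta> (tA \<theta> (idm P)))
               = cmp \<theta> (cmp (tA (idm P) \<theta>) (\<alpha> P P P))"
    and h1: "cmp \<theta> (tA C (idm P)) = cmp C \<theta>"
    and h2: "cmp \<theta> (tA (idm P) C) = cmp C \<theta>"
  shows "C = idm P"
proof -
  define I where "I = idm P"
  define Q where "Q = tO P P"
  have [simp]: "I \<in> Ar" "dm I = P" "cd I = P" "Q \<in> Ob" using Pob by (auto simp: I_def Q_def)
  note th' = th(1-3)[folded Q_def] and Ch' = Ch(1-3)
  note [simp] = th' Ch' Pob
  have Cdef': "cmp C (cmp \<theta> (tA \<theta> I)) = cmp \<theta> (cmp (tA I \<theta>) (\<alpha> P P P))"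
    using Cdef by (simp add: I_def)
  have CdefX: "cmp \<theta> (cmp (tA I \<theta>) (cmp (\<alpha> P P P) x)) = cmp C (cmp \<theta> (cmp (tA \<theta> I) x))"
    if "x \<in> Ar" "cd x = tO Q P" for x
    using xform[OF Cdef'[symmetric], of x] that by (simp add: Q_def)
  have h1X: "cmp \<theta> (cmp (tA C I) x) = cmp C (cmp \<theta> x)" if "x \<in> Ar" "cd x = Q" for x
    using xform[OF h1[folded I_def], of x] that by (simp add: Q_def)
  have h2X: "cmp \<theta> (cmp (tA I C) x) = cmp C (cmp \<theta> x)" if "x \<in> Ar" "cd x = Q" for x
    using xform[OF h2[folded I_def], of x] that by (simp add: Q_def)
  have idQ: "tA I I = idm Q" by (simp add: I_def Q_def)
  have pe: "cmp (tA I (\<alpha> P P P)) (cmp (\<alpha> P Q P) (tA (\<alpha> P P P) I)) = cmp (\<alpha> P P Q) (\<alpha> Q P P)"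
    using pent[OF Pob Pob Pob Pob] by (simp add: I_def Q_def)
  have n1: "cmp (tA I (tA I \<theta>)) (\<alpha> P P Q) = cmp (\<alpha> P P P) (tA (idm Q) \<theta>)"
    using nat[of I I \<theta>] idQ by (simp add: Q_def)
  have n2: "cmp (tA \<theta> (idm Q)) (\<alpha> Q P P) = cmp (\<alpha> P P P) (tA (tA \<theta> I) I)"
    using nat[of \<theta> I I] idQ by (simp add: Q_def)
  have n3: "cmp (tA I (tA \<theta> I)) (\<alpha> P Q P) = cmp (\<alpha> P P P) (tA (tA I \<theta>) I)"
    using nat[of I \<theta> I] by (simp add: Q_def)
  have tt1: "cmp (tA \<theta> I) (tA (idm Q) \<theta>) = tA \<theta> \<theta>"
    using tA_cmp[of "idm Q" \<theta> \<theta> I] by (simp add: I_def Q_def)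
  have tt2: "cmp (tA I \<theta>) (tA \<theta> (idm Q)) = tA \<theta> \<theta>"
    using tA_cmp[of \<theta> I "idm Q" \<theta>] by (simp add: I_def Q_def)
  define E where "E = cmp \<theta> (cmp (tA I \<theta>) (cmp (tA I (tA I \<theta>)) (cmp (tA I (\<alpha> P P P)) (cmp (\<alpha> P Q P) (tA (\<alpha> P P P) I)))))"
  define X where "X = cmp \<theta> (cmp (tA \<theta> I) (tA (tA \<theta> I) I))"
  have R: "E = cmp C (cmp C X)"
  proof -
    have "E = cmp \<theta> (cmp (tA I \<theta>) (cmp (tA I (tA I \<theta>)) (cmp (\<alpha> P P Q) (\<alpha> Q P P))))"
      unfolding E_def pe ..
    also have "\<dots> = cmp \<theta> (cmp (tA I \<theta>) (cmp (\<alpha> P P P) (cmp (tA (idm Q) \<theta>) (\<alpha> Q P P))))"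
      using xform[OF n1, of "\<alpha> Q P P"] by (simp add: Q_def)
    also have "\<dots> = cmp C (cmp \<theta> (cmp (tA \<theta> I) (cmp (tA (idm Q) \<theta>) (\<alpha> Q P P))))"
      by (rule CdefX) (auto simp: Q_def)
    also have "\<dots> = cmp C (cmp \<theta> (cmp (tA \<theta> \<theta>) (\<alpha> Q P P)))"
      by (simp add: Q_def flip: tt1)
    also have "\<dots> = cmp C (cmp \<theta> (cmp (tA I \<theta>) (cmp (tA \<theta> (idm Q)) (\<alpha> Q P P))))"
      by (simp add: Q_def flip: tt2)
    also have "\<dots> = cmp C (cmp \<theta> (cmp (tA I \<theta>) (cmp (\<alpha> P P P) (tA (tA \<theta> I) I))))"
      using n2 by simp
    also have "\<dots> = cmp C (cmp C X)"
      unfolding X_def by (subst CdefX) (auto simp: Q_def)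
    finally show ?thesis .
  qed
  have L: "E = cmp C (cmp C (cmp C X))"
  proof -
    have "E = cmp \<theta> (cmp (tA I (cmp \<theta> (cmp (tA I \<theta>) (\<alpha> P P P)))) (cmp (\<alpha> P Q P) (tA (\<alpha> P P P) I)))"
      unfolding E_def I_def by (simp add: tA_Icmp Q_def)
    also have "\<dots> = cmp \<theta> (cmp (tA I (cmp C (cmp \<theta> (tA \<theta> I)))) (cmp (\<alpha> P Q P) (tA (\<alpha> P P P) I)))"
      by (simp only: Cdef')
    also have "\<dots> = cmp \<theta> (cmp (tA I C) (cmp (tA I \<theta>) (cmp (tA I (tA \<theta> I)) (cmp (\<alpha> P Q P) (tA (\<alpha> P P P) I)))))"
      unfolding I_def by (simp add: tA_Icmp Q_def)
    also have "\<dots> = cmp C (cmp \<theta> (cmp (tA I \<theta>) (cmp (tA I (tA \<theta> I)) (cmp (\<alpha> P Q P) (tA (\<alpha> P P P) I)))))"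
      by (rule h2X) (auto simp: Q_def)
    also have "\<dots> = cmp C (cmp \<theta> (cmp (tA I \<theta>) (cmp (\<alpha> P P P) (cmp (tA (tA I \<theta>) I) (tA (\<alpha> P P P) I)))))"
      using xform[OF n3, of "tA (\<alpha> P P P) I"] by (simp add: Q_def)
    also have "\<dots> = cmp C (cmp C (cmp \<theta> (cmp (tA \<theta> I) (cmp (tA (tA I \<theta>) I) (tA (\<alpha> P P P) I)))))"
      by (subst CdefX) (auto simp: Q_def)
    also have "\<dots> = cmp C (cmp C (cmp \<theta> (tA (cmp \<theta> (cmp (tA I \<theta>) (\<alpha> P P P))) I)))"
      unfolding I_def by (simp add: tA_cmpI Q_def)
    also have "\<dots> = cmp C (cmp C (cmp \<theta> (tA (cmp C (cmp \<theta> (tA \<theta> I))) I)))"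
      by (simp only: Cdef')
    also have "\<dots> = cmp C (cmp C (cmp \<theta> (cmp (tA C I) (cmp (tA \<theta> I) (tA (tA \<theta> I) I)))))"
      unfolding I_def by (simp add: tA_cmpI Q_def)
    also have "\<dots> = cmp C (cmp C (cmp C X))"
      unfolding X_def by (subst h1X) (auto simp: Q_def)
    finally show ?thesis .
  qed
  have eq: "cmp C (cmp C (cmp C X)) = cmp C (cmp C X)" using L R by simp
  obtain Ci where Ci: "Ci \<in> Ar" "dm Ci = P" "cd Ci = P" "cmp Ci C = idm P"
    using Ch(4) unfolding iso_arr_def by (auto simp: Ch')
  obtain ti where ti: "ti \<in> Ar" "dm ti = P" "cd ti = Q" "cmp \<theta> ti = idm P"
    using th(4) unfolding iso_arr_def by (auto simp: th')
  note [simp] = Ci(1-3) ti(1-3)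
  have t1: "cmp (tA \<theta> I) (tA ti I) = idm (tO P P)"
    using tA_cmp[of ti \<theta> I I] ti(4) by (simp add: I_def)
  have t2: "cmp (tA (tA \<theta> I) I) (tA (tA ti I) I) = idm (tO (tO P P) P)"
    using tA_cmp[of "tA ti I" "tA \<theta> I" I I] t1 by (simp add: I_def)
  define Y where "Y = cmp (tA (tA ti I) I) (cmp (tA ti I) ti)"
  have [simp]: "X \<in> Ar" "dm X = tO (tO Q P) P" "cd X = P" "Y \<in> Ar" "dm Y = P" "cd Y = tO (tO Q P) P"
    unfolding X_def Y_def by (simp_all add: Q_def)
  have XY: "cmp X Y = idm P"
  proof -
    have "cmp X Y = cmp \<theta> (cmp (tA \<theta> I) (cmp (cmp (tA (tA \<theta> I) I) (tA (tA ti I) I)) (cmp (tA ti I) ti)))"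
      unfolding X_def Y_def by (simp add: Q_def)
    also have "\<dots> = cmp \<theta> (cmp (cmp (tA \<theta> I) (tA ti I)) ti)"
      unfolding t2 by (simp add: Q_def)
    also have "\<dots> = idm P" unfolding t1 using ti(4) by (simp add: Q_def)
    finally show ?thesis .
  qed
  have "cmp (cmp C (cmp C (cmp C X))) Y = cmp (cmp C (cmp C X)) Y" using eq by simp
  hence e2: "cmp C (cmp C C) = cmp C C" using XY by simp
  have CiX: "cmp Ci (cmp C x) = x" if "x \<in> Ar" "cd x = P" for x
  proof -
    have "cmp Ci (cmp C x) = cmp (cmp Ci C) x" using that by simp
    thus ?thesis using Ci(4) that by simp
  qed
  have "cmp Ci (cmp Ci (cmp C (cmp C C))) = cmp Ci (cmp Ci (cmp C C))" using e2 by simp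
  thus ?thesis by (simp add: CiX Ci(4))
qed

end

theorem mainTheorem1:
  fixes Ob :: "'o set" and Ar :: "'m set" and dm cd :: "'m \<Rightarrow> 'o"
    and cmp :: "'m \<Rightarrow> 'm \<Rightarrow> 'm" and idm :: "'o \<Rightarrow> 'm"
    and tO :: "'o \<Rightarrow> 'o \<Rightarrow> 'o" and tA :: "'m \<Rightarrow> 'm \<Rightarrow> 'm"
    and \<alpha> :: "'o \<Rightarrow> 'o \<Rightarrow> 'o \<Rightarrow> 'm"
    and P :: 'o and \<theta> C :: 'm
  assumes cat: "category Ob Ar dm cd cmp idm"
    and tens: "bifunctor Ob Ar dm cd cmp idm tO tA"
    and asc: "assoc_constraint Ob Ar dm cd cmp idm tO tA \<alpha>"
    and Pob: "P \<in> Ob"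
    and th: "\<theta> \<in> hom Ar dm cd (tO P P) P" "iso_arr Ar dm cd cmp idm \<theta>"
    and Chom: "C \<in> hom Ar dm cd P P" "iso_arr Ar dm cd cmp idm C"
    and Cdef: "cmp C (cmp \<theta> (tA \<theta> (idm P)))
               = cmp \<theta> (cmp (tA (idm P) \<theta>) (\<alpha> P P P))"
    and h1: "cmp \<theta> (tA C (idm P)) = cmp C \<theta>"
    and h2: "cmp \<theta> (tA (idm P) C) = cmp C \<theta>"
  shows "C = idm P"
proof -
  interpret cdat Ob Ar dm cd cmp idm tO tA \<alpha> using cat tens asc by unfold_locales
  show ?thesis
    using mainlemma[OF Pob _ _ _ th(2) _ _ _ Chom(2) Cdef h1 h2] th(1) Chom(1)
    unfolding hom_def by auto
qed

end
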